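(* Let $\Psi=(\psi_k)_{k\in\mathbb N}$ with $\psi_k\in(-\pi/2,\pi/2)$, and let $F_n=i\tan(\psi_{|n|})$ for $n\in\mathbb Z$. For $d\ge0$ let $G_d$ be the $SU(2)$ nonlinear Fourier series of the finitely supported sequence $(F_n\mathbf 1_{\{-d\le n\le d\}})_{n\in\mathbb Z}$. For $x\in[0,1]$ let $\theta$ be the unique number in $[0,\pi/2]$ with $\cos\theta=x$ and set $z=e^{2i\theta}$. Then for every $d\ge0$, $$M\,U_d(\Psi,x)\,M=\begin{pmatrix}e^{id\theta}&0\\0&e^{-id\theta}\end{pmatrix}G_d(z)\begin{pmatrix}e^{id\theta}&0\\0&e^{-id\theta}\end{pmatrix}.$$
   Context: $W(x)=\begin{pmatrix}x& i\sqrt{1-x^2}\\ i\sqrt{1-x^2}& x\end{pmatrix}$, $Z=\begin{pmatrix}1&0\\0&-1\end{pmatrix}$, $M=2^{-1/2}\begin{pmatrix}1&1\\1&-1\end{pmatrix}$. $U_0(\Psi,x)=e^{i\psi_0Z}$ and $U_d(\Psi,x)=e^{i\psi_dZ}W(x)U_{d-1}(\Psi,x)W(x)e^{i\psi_dZ}$ for $d\ge1$. For a finitely supported sequence $F:\mathbb Z\to\mathbb C$, its $SU(2)$ nonlinear Fourier series is the matrix-valued function $G(z)=\prod_{k}(1+|F_k|^2)^{-1/2}\begin{pmatrix}1&F_kz^k\\-\overline{F_k}z^{-k}&1\end{pmatrix}$, where the (finite) product is ordered with $k$ increasing from left to right. *)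

theory Defs
  imports "HOL-Analysis.Analysis"
begin

type_synonym cmat = "complex^2^2"

definition mat2 :: "complex \<Rightarrow> complex \<Rightarrow> complex \<Rightarrow> complex \<Rightarrow> cmat" where
  "mat2 a b c d = (\<chi> i j. if i = 1 then (if j = 1 then a else b) else (if j = 1 then c else d))"

definition Wmat :: "real \<Rightarrow> cmat" where
  "Wmat x = mat2 (complex_of_real x) (\<i> * complex_of_real (sqrt (1 - x\<^sup>2)))
                 (\<i> * complex_of_real (sqrt (1 - x\<^sup>2))) (complex_of_real x)"

definition Mmat :: cmat where
  "Mmat = mat2 (1 / complex_of_real (sqrt 2)) (1 / complex_of_real (sqrt 2))
               (1 / complex_of_real (sqrt 2)) (- 1 / complex_of_real (sqrt 2))"

definition expZ :: "real \<Rightarrow> cmat" where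
  "expZ psi = mat2 (exp (\<i> * complex_of_real psi)) 0 0 (exp (- \<i> * complex_of_real psi))"

fun U :: "(nat \<Rightarrow> real) \<Rightarrow> nat \<Rightarrow> real \<Rightarrow> cmat" where
  "U \<Psi> 0 x = expZ (\<Psi> 0)"
| "U \<Psi> (Suc d) x = expZ (\<Psi> (Suc d)) ** Wmat x ** U \<Psi> d x ** Wmat x ** expZ (\<Psi> (Suc d))"

definition nlft_factor :: "complex \<Rightarrow> int \<Rightarrow> complex \<Rightarrow> cmat" where
  "nlft_factor Fk k z =
     (let c = complex_of_real (1 / sqrt (1 + (cmod Fk)\<^sup>2))
      in mat2 c (c * Fk * z powi k) (- c * cnj Fk * z powi (- k)) c)"

definition supp_radius :: "(int \<Rightarrow> complex) \<Rightarrow> nat" where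
  "supp_radius F = (LEAST N. \<forall>k. F k \<noteq> 0 \<longrightarrow> \<bar>k\<bar> \<le> int N)"

definition nlft :: "(int \<Rightarrow> complex) \<Rightarrow> complex \<Rightarrow> cmat" where
  "nlft F z = foldr (\<lambda>k A. nlft_factor (F k) k z ** A)
                 [- int (supp_radius F) .. int (supp_radius F)] (mat 1)"

end

theory Submission
  imports Defs
begin
lemma mat2_mult: "mat2 a b c d ** mat2 a' b' c' d' = mat2 (a*a' + b*c') (a*b' + b*d') (c*a' + d*c') (c*b' + d*d')"
  unfolding matrix_matrix_mult_def mat2_def
  by (simp add: vec_eq_iff forall_2 UNIV_2 sum_2)
lemma mat1_mat2: "(mat 1 :: cmat) = mat2 1 0 0 1"
  unfolding mat_def mat2_def by (simp add: vec_eq_iff forall_2)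
lemma mat2_eq: "mat2 a b c d = mat2 a' b' c' d' \<longleftrightarrow> a = a' \<and> b = b' \<and> c = c' \<and> d = d'"
  unfolding mat2_def by (simp add: vec_eq_iff forall_2)
lemma s2: "complex_of_real (sqrt 2) * complex_of_real (sqrt 2) = 2"
  by (simp flip: of_real_mult)
lemma s2': "complex_of_real (sqrt 2) * (complex_of_real (sqrt 2) * y) = 2 * y"
  by (simp add: mult.assoc[symmetric] s2)
lemma expi: "exp (\<i> * complex_of_real p) = complex_of_real (cos p) + \<i> * complex_of_real (sin p)"
  using cis_conv_exp[of p] by (simp add: cis.ctr Complex_eq)
lemma expmi: "exp (- \<i> * complex_of_real p) = complex_of_real (cos p) - \<i> * complex_of_real (sin p)"
  using expi[of "-p"] by simp
lemma MM: "Mmat ** Mmat = mat 1"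
  unfolding Mmat_def mat1_mat2 mat2_mult mat2_eq
  by (simp add: field_simps s2 s2')
lemma MWM: "Mmat ** Wmat x ** Mmat = mat2 (x + \<i> * sqrt (1 - x^2)) 0 0 (x - \<i> * sqrt (1 - x^2))"
  unfolding Mmat_def Wmat_def mat2_mult mat2_eq
  by (simp add: field_simps s2 s2')
lemma MEM: "Mmat ** expZ p ** Mmat = mat2 (cos p) (\<i> * sin p) (\<i> * sin p) (cos p)"
  unfolding Mmat_def expZ_def mat2_mult mat2_eq expi expmi
  by (simp add: field_simps s2 s2')

lemma factor_eq:
  assumes "cos p > 0"
  shows "nlft_factor (\<i> * complex_of_real (tan p)) k z
     = mat2 (cos p) (\<i> * sin p * z powi k) (\<i> * sin p * z powi (-k)) (cos p)"
proof -
  have c: "cos p \<noteq> 0" using assms by simp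
  have "1 + (tan p)^2 = 1 / (cos p)^2"
    using c sin_cos_squared_add[of p] by (simp add: tan_def field_simps)
  hence "sqrt (1 + (tan p)^2) = 1 / cos p" using assms by (simp add: real_sqrt_divide)
  hence e: "1 / sqrt (1 + (cmod (\<i> * complex_of_real (tan p)))\<^sup>2) = cos p"
    by (simp add: norm_mult)
  have t: "complex_of_real (cos p) * (\<i> * complex_of_real (tan p)) = \<i> * sin p"
    using c by (simp add: tan_def flip: of_real_mult)
  show ?thesis unfolding nlft_factor_def Let_def e mat2_eq
    using t by (simp add: algebra_simps)
qed

lemma factor0: "nlft_factor 0 k z = mat 1"
  unfolding nlft_factor_def mat1_mat2 by simp

definition P :: "(int \<Rightarrow> cmat) \<Rightarrow> nat \<Rightarrow> cmat" where
  "P g N = foldr (\<lambda>k A. g k ** A) [- int N .. int N] (mat 1)"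

lemma foldr_mult: "foldr (\<lambda>k A. g k ** A) xs B = foldr (\<lambda>k A. g k ** A) xs (mat 1) ** B"
  by (induction xs) (simp_all add: matrix_mul_assoc)

lemma upto_Suc: "[- int (Suc N) .. int (Suc N)] = (- int (Suc N)) # [- int N .. int N] @ [int (Suc N)]"
proof -
  have "[- int (Suc N) .. int (Suc N)] = (- int (Suc N)) # [- int N .. int (Suc N)]"
    by (subst upto_rec1) (auto simp: algebra_simps)
  also have "[- int N .. int (Suc N)] = [- int N .. int N] @ [int (Suc N)]"
    by (subst upto_rec2) auto
  finally show ?thesis .
qed

lemma P_Suc: "P g (Suc N) = g (- int (Suc N)) ** P g N ** g (int (Suc N))"
  unfolding P_def upto_Suc
  apply simp
  apply (subst foldr_mult)
  apply (simp add: matrix_mul_assoc)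
  done

lemma P_stable:
  assumes "\<And>k. \<bar>k\<bar> > int s \<Longrightarrow> g k = mat 1" and "s \<le> N"
  shows "P g N = P g s"
  using assms(2)
proof (induction N rule: dec_induct)
  case base then show ?case by simp
next
  case (step n)
  have "g (- int (Suc n)) = mat 1" "g (int (Suc n)) = mat 1" using step assms(1) by auto
  then show ?case using step by (simp add: P_Suc)
qed

lemma P_cong: "(\<And>k. \<bar>k\<bar> \<le> int N \<Longrightarrow> g k = h k) \<Longrightarrow> P g N = P h N"
  unfolding P_def by (intro foldr_cong) auto
lemma MM': "X ** Mmat ** Mmat = X"
  by (metis MM matrix_mul_assoc matrix_mul_rid)

definition Dm :: "complex \<Rightarrow> nat \<Rightarrow> cmat" where
  "Dm a n = mat2 (a^n) 0 0 (inverse a ^ n)"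

lemma main_ind:
  fixes \<Psi> :: "nat \<Rightarrow> real"
  assumes pos: "\<And>k. cos (\<Psi> k) > 0" and a0: "a \<noteq> 0"
    and W: "Mmat ** Wmat x ** Mmat = mat2 a 0 0 (inverse a)"
    and F: "F = (\<lambda>n::int. \<i> * complex_of_real (tan (\<Psi> (nat \<bar>n\<bar>))))"
  shows "Mmat ** U \<Psi> d x ** Mmat = Dm a d ** P (\<lambda>k. nlft_factor (F k) k (a^2)) d ** Dm a d"
proof (induction d)
  case 0
  show ?case
    by (simp add: MEM Dm_def P_def F factor_eq[OF pos] mat2_mult mat1_mat2)
next
  case (Suc d)
  let ?E = "expZ (\<Psi> (Suc d))"
  let ?W = "Wmat x"
  let ?C = "complex_of_real (cos (\<Psi> (Suc d)))"
  let ?S = "complex_of_real (sin (\<Psi> (Suc d)))"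
  let ?g = "\<lambda>k. nlft_factor (F k) k (a^2)"
  have split: "Mmat ** U \<Psi> (Suc d) x ** Mmat = (Mmat ** ?E ** Mmat) ** (Mmat ** ?W ** Mmat) **
     (Mmat ** U \<Psi> d x ** Mmat) ** (Mmat ** ?W ** Mmat) ** (Mmat ** ?E ** Mmat)"
    by (simp add: matrix_mul_assoc MM')
  have gm: "?g (- int (Suc d)) = mat2 ?C (\<i> * ?S * inverse ((a^2)^(Suc d))) (\<i> * ?S * (a^2)^(Suc d)) ?C"
    unfolding F by (simp add: factor_eq[OF pos] power_int_minus del: of_nat_Suc)
  have gp: "?g (int (Suc d)) = mat2 ?C (\<i> * ?S * (a^2)^(Suc d)) (\<i> * ?S * inverse ((a^2)^(Suc d))) ?C"
    unfolding F by (simp add: factor_eq[OF pos] power_int_minus del: of_nat_Suc)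
  have L1: "Dm a (Suc d) ** ?g (- int (Suc d)) = (Mmat ** ?E ** Mmat) ** (Mmat ** ?W ** Mmat) ** Dm a d"
    unfolding gm W MEM Dm_def mat2_mult mat2_eq
    using a0 by (simp add: field_simps power_inverse power_mult_distrib power2_eq_square)
  have L2: "?g (int (Suc d)) ** Dm a (Suc d) = Dm a d ** (Mmat ** ?W ** Mmat) ** (Mmat ** ?E ** Mmat)"
    unfolding gp W MEM Dm_def mat2_mult mat2_eq
    using a0 by (simp add: field_simps power_inverse power_mult_distrib power2_eq_square)
  have "Dm a (Suc d) ** P ?g (Suc d) ** Dm a (Suc d)
      = (Dm a (Suc d) ** ?g (- int (Suc d))) ** P ?g d ** (?g (int (Suc d)) ** Dm a (Suc d))"
    by (simp add: P_Suc matrix_mul_assoc del: of_nat_Suc)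
  also have "\<dots> = Mmat ** U \<Psi> (Suc d) x ** Mmat"
    unfolding L1 L2 split Suc by (simp add: matrix_mul_assoc)
  finally show ?case by simp
qed
theorem lemma4p1:
  fixes \<Psi> :: "nat \<Rightarrow> real" and d :: nat and x :: real
  assumes "\<And>k. \<Psi> k \<in> {- pi / 2 <..< pi / 2}"
    and "x \<in> {0..1}"
  defines "F \<equiv> (\<lambda>n::int. \<i> * complex_of_real (tan (\<Psi> (nat \<bar>n\<bar>))))"
    and "\<theta> \<equiv> (THE t. t \<in> {0..pi / 2} \<and> cos t = x)"
  defines "z \<equiv> exp (2 * \<i> * complex_of_real \<theta>)"
    and "D \<equiv> mat2 (exp (\<i> * of_nat d * complex_of_real \<theta>)) 0 0 (exp (- \<i> * of_nat d * complex_of_real \<theta>))"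
  shows "Mmat ** U \<Psi> d x ** Mmat
           = D ** nlft (\<lambda>n. if - int d \<le> n \<and> n \<le> int d then F n else 0) z ** D"
proof -
  have pos: "cos (\<Psi> k) > 0" for k
    using assms(1)[of k] by (intro cos_gt_zero_pi) auto
  have x: "0 \<le> x" "x \<le> 1" using assms(2) by auto
  have th: "\<theta> = arccos x"
    unfolding \<theta>_def
  proof (rule the_equality)
    show "arccos x \<in> {0..pi / 2} \<and> cos (arccos x) = x"
      using x arccos_le_pi2[OF x] by (auto intro: arccos_lbound cos_arccos)
  next
    fix t assume "t \<in> {0..pi / 2} \<and> cos t = x"
    then have "0 \<le> t" "t \<le> pi" "cos t = x" using pi_gt_zero by auto
    then show "t = arccos x" using arccos_cos by metis
  qed
  define a where "a = exp (\<i> * complex_of_real \<theta>)"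
  have a0: "a \<noteq> 0" unfolding a_def by simp
  have cs: "cos \<theta> = x" "sin \<theta> = sqrt (1 - x^2)"
    using x by (simp_all add: th cos_arccos sin_arccos)
  have W: "Mmat ** Wmat x ** Mmat = mat2 a 0 0 (inverse a)"
  proof -
    have "inverse a = exp (- \<i> * complex_of_real \<theta>)" unfolding a_def by (simp add: exp_minus)
    also have "\<dots> = x - \<i> * sqrt (1 - x^2)" by (simp only: expmi cs)
    finally have ia: "inverse a = x - \<i> * sqrt (1 - x^2)" .
    have "a = x + \<i> * sqrt (1 - x^2)" unfolding a_def by (simp only: expi cs)
    then show ?thesis unfolding MWM ia by simp
  qed
  have Dd: "D = Dm a d"
    unfolding D_def Dm_def a_def
    by (simp add: exp_of_nat_mult[symmetric] exp_minus power_inverse mult_ac)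
  have za: "z = a^2" unfolding z_def a_def
    by (simp add: exp_of_nat_mult[symmetric] mult_ac)
  define G where "G = (\<lambda>n. if - int d \<le> n \<and> n \<le> int d then F n else 0)"
  define s where "s = supp_radius G"
  have ex: "\<forall>k. G k \<noteq> 0 \<longrightarrow> \<bar>k\<bar> \<le> int d" unfolding G_def by auto
  have sprop: "\<forall>k. G k \<noteq> 0 \<longrightarrow> \<bar>k\<bar> \<le> int s"
    unfolding s_def supp_radius_def by (rule LeastI[of _ d], rule ex)
  have sd: "s \<le> d"
    unfolding s_def supp_radius_def by (rule Least_le, rule ex)
  have "nlft G z = P (\<lambda>k. nlft_factor (G k) k z) s"
    unfolding nlft_def P_def s_def ..
  also have "\<dots> = P (\<lambda>k. nlft_factor (G k) k z) d"
    by (rule P_stable[symmetric, OF _ sd]) (metis sprop factor0 not_le)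
  also have "\<dots> = P (\<lambda>k. nlft_factor (F k) k z) d"
    by (rule P_cong) (auto simp: G_def)
  finally have N: "nlft G z = P (\<lambda>k. nlft_factor (F k) k (a^2)) d" by (simp add: za)
  show ?thesis
    unfolding G_def[symmetric] N Dd
    by (rule main_ind[OF pos a0 W meta_eq_to_obj_eq[OF F_def]])
qed
end
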